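(* Let $m$ be a positive integer, let $\mathcal{N}_r$ be the gadget of size $m$, and let $\pi$ be an $\mathcal{H}^{(\ast)}$-partition of $\mathcal{N}_r$. Then either for each $i\in\{0,1,\dots,m\}$ there exists $L_i\in\pi$ such that the Hamiltonian path of $\mathcal{N}_r[L_i]$ is a subsequence of $\swarrow_r^{i}=(r_{i,0},r_{i,1},\dots,r_{i,m})$, or for each $i\in\{0,1,\dots,m\}$ there exists $R_i\in\pi$ such that the Hamiltonian path of $\mathcal{N}_r[R_i]$ is a subsequence of $\searrow_r^{i}=(r_{0,i},r_{1,i},\dots,r_{m,i})$.
   Context: The gadget $\mathcal{N}_r=\langle\mathcal{V}_r,\mathcal{E}_r\rangle$ of size $m$ has vertex set $\mathcal{V}_r=\{r_{i,j}:0\le i,j\le m\}$ and arc set $\mathcal{E}_r=\swarrow_r\cup\searrow_r$, where $\swarrow_r=\{\langle r_{i,j},r_{i,j+1}\rangle:0\le i\le m,\ 0\le j<m\}$ and $\searrow_r=\{\langle r_{i,j},r_{i+1,j}\rangle:0\le i<m,\ 0\le j\le m\}$; it is a DAG. For a digraph $G$ and a subset $V_1$ of its vertices, $G[V_1]$ is the induced subgraph. A partition $\pi$ of the vertex set of a DAG $G$ is an $\mathcal{H}^{(\ast)}$-partition if every induced subgraph $G[P]$, $P\in\pi$, has a directed Hamiltonian path (unique in a DAG) and the quotient digraph $G/\pi$ (vertex set $\pi$, arc $\langle P,Q\rangle$ for $P\ne Q$ whenever some arc of $G$ goes from $P$ to $Q$) is acyclic. *)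

theory Defs
  imports Main "HOL-Library.Disjoint_Sets" "HOL-Library.Sublist"
begin

(* Gadget N_r of size m: vertex r_{i,j} is represented by the pair (i,j). *)
definition gadget_V :: "nat \<Rightarrow> (nat \<times> nat) set" where
  "gadget_V m = {(i,j). i \<le> m \<and> j \<le> m}"

definition gadget_sw :: "nat \<Rightarrow> ((nat \<times> nat) \<times> (nat \<times> nat)) set" where
  "gadget_sw m = {((i,j),(i,j+1)) | i j. i \<le> m \<and> j < m}"

definition gadget_se :: "nat \<Rightarrow> ((nat \<times> nat) \<times> (nat \<times> nat)) set" where
  "gadget_se m = {((i,j),(i+1,j)) | i j. i < m \<and> j \<le> m}"

definition gadget_E :: "nat \<Rightarrow> ((nat \<times> nat) \<times> (nat \<times> nat)) set" where
  "gadget_E m = gadget_sw m \<union> gadget_se m"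

definition ham_path :: "('a \<times> 'a) set \<Rightarrow> 'a set \<Rightarrow> 'a list \<Rightarrow> bool" where
  "ham_path E P ps \<longleftrightarrow> distinct ps \<and> set ps = P \<and>
     successively (\<lambda>x y. (x, y) \<in> E \<inter> (P \<times> P)) ps"

definition quotient_arcs :: "('a \<times> 'a) set \<Rightarrow> 'a set set \<Rightarrow> ('a set \<times> 'a set) set" where
  "quotient_arcs E \<pi> = {(P,Q). P \<in> \<pi> \<and> Q \<in> \<pi> \<and> P \<noteq> Q \<and> (\<exists>u\<in>P. \<exists>v\<in>Q. (u,v) \<in> E)}"

definition H_star_partition :: "'a set \<Rightarrow> ('a \<times> 'a) set \<Rightarrow> 'a set set \<Rightarrow> bool" where
  "H_star_partition V E \<pi> \<longleftrightarrow> partition_on V \<pi> \<and>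
     (\<forall>P\<in>\<pi>. \<exists>ps. ham_path E P ps) \<and> acyclic (quotient_arcs E \<pi>)"

end

theory Submission
  imports Defs
begin

lemma arc_props:
  assumes "(a,b) \<in> gadget_E m"
  shows "a \<in> gadget_V m" "b \<in> gadget_V m" "fst a \<le> fst b" "snd a \<le> snd b"
    "fst a = fst b \<Longrightarrow> snd b = Suc (snd a)" "snd a = snd b \<Longrightarrow> fst b = Suc (fst a)"
  using assms unfolding gadget_E_def gadget_sw_def gadget_se_def gadget_V_def by auto

lemma horiz: "i \<le> m \<Longrightarrow> j + d \<le> m \<Longrightarrow> ((i,j),(i,j+d)) \<in> (gadget_E m)\<^sup>*"
proof (induction d)
  case 0 then show ?case by simp
next
  case (Suc d)
  have "((i,j+d),(i,j+d+1)) \<in> gadget_E m"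
    using Suc.prems unfolding gadget_E_def gadget_sw_def by auto
  with Suc show ?case by (simp add: rtrancl_into_rtrancl)
qed

lemma vert: "i + d \<le> m \<Longrightarrow> j \<le> m \<Longrightarrow> ((i,j),(i+d,j)) \<in> (gadget_E m)\<^sup>*"
proof (induction d)
  case 0 then show ?case by simp
next
  case (Suc d)
  have "((i+d,j),(i+d+1,j)) \<in> gadget_E m"
    using Suc.prems unfolding gadget_E_def gadget_se_def by auto
  with Suc show ?case by (simp add: rtrancl_into_rtrancl)
qed

lemma grid_path:
  assumes "i \<le> i'" "j \<le> j'" "i' \<le> m" "j' \<le> m"
  shows "((i,j),(i',j')) \<in> (gadget_E m)\<^sup>*"
proof -
  have "((i,j),(i,j')) \<in> (gadget_E m)\<^sup>*"
    using horiz[of i m j "j'-j"] assms by simp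
  moreover have "((i,j'),(i',j')) \<in> (gadget_E m)\<^sup>*"
    using vert[of i "i'-i" m j'] assms by simp
  ultimately show ?thesis by simp
qed

lemma lift_path:
  assumes part: "partition_on (gadget_V m) \<pi>"
    and A: "A \<in> \<pi>" "a \<in> A" and ab: "(a,b) \<in> (gadget_E m)\<^sup>*"
  shows "\<forall>B\<in>\<pi>. b \<in> B \<longrightarrow> (A,B) \<in> (quotient_arcs (gadget_E m) \<pi>)\<^sup>*"
  using ab
proof (induction rule: rtrancl_induct)
  case base
  show ?case
  proof (intro ballI impI)
    fix B assume "B \<in> \<pi>" "a \<in> B"
    then have "A = B" using A part partition_onD2[OF part] by (auto simp: disjoint_def)
    then show "(A,B) \<in> (quotient_arcs (gadget_E m) \<pi>)\<^sup>*" by simp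
  qed
next
  case (step b c)
  have "b \<in> gadget_V m" using arc_props(1)[OF step(2)] .
  then obtain B' where B': "B' \<in> \<pi>" "b \<in> B'" using partition_onD1[OF part] by blast
  with step have AB': "(A,B') \<in> (quotient_arcs (gadget_E m) \<pi>)\<^sup>*" by blast
  show ?case
  proof (intro ballI impI)
    fix B assume B: "B \<in> \<pi>" "c \<in> B"
    show "(A,B) \<in> (quotient_arcs (gadget_E m) \<pi>)\<^sup>*"
    proof (cases "B' = B")
      case True then show ?thesis using AB' by simp
    next
      case False
      then have "(B',B) \<in> quotient_arcs (gadget_E m) \<pi>"
        unfolding quotient_arcs_def using B B' step(2) by blast
      then show ?thesis using AB' by (simp add: rtrancl_into_rtrancl)
    qed
  qed
qed

lemma sorted_wrt_comp:
  "sorted_wrt R xs \<Longrightarrow> x \<in> set xs \<Longrightarrow> y \<in> set xs \<Longrightarrow> x = y \<or> R x y \<or> R y x"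
  by (induction xs) auto

lemma part_chain:
  assumes "ham_path (gadget_E m) P ps" "u \<in> P" "w \<in> P"
  shows "(fst u \<le> fst w \<and> snd u \<le> snd w) \<or> (fst w \<le> fst u \<and> snd w \<le> snd u)"
proof -
  let ?le = "\<lambda>u w. fst u \<le> fst w \<and> snd (u::nat\<times>nat) \<le> snd w"
  have s: "successively (\<lambda>x y. (x, y) \<in> gadget_E m \<inter> (P \<times> P)) ps" "set ps = P"
    using assms(1) unfolding ham_path_def by auto
  have "successively ?le ps"
    using s(1) by (rule successively_mono) (auto dest: arc_props)
  moreover have "transp ?le" by (auto simp: transp_def)
  ultimately have "sorted_wrt ?le ps" by (simp add: successively_conv_sorted_wrt)
  from sorted_wrt_comp[OF this, of u w] assms(2,3) s(2) show ?thesis by auto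
qed

lemma part_convex:
  assumes H: "H_star_partition (gadget_V m) (gadget_E m) \<pi>"
    and P: "P \<in> \<pi>" "u \<in> P" "w \<in> P"
    and z: "fst u \<le> fst z" "snd u \<le> snd z" "fst z \<le> fst w" "snd z \<le> snd w"
  shows "z \<in> P"
proof (rule ccontr)
  assume zP: "z \<notin> P"
  have part: "partition_on (gadget_V m) \<pi>" and ac: "acyclic (quotient_arcs (gadget_E m) \<pi>)"
    using H unfolding H_star_partition_def by auto
  have wV: "w \<in> gadget_V m" using P part partition_onD1 by blast
  then have zV: "z \<in> gadget_V m" using z unfolding gadget_V_def by (cases z; cases w) auto
  have uV: "u \<in> gadget_V m" using P part partition_onD1 by blast
  obtain Q where Q: "Q \<in> \<pi>" "z \<in> Q" using zV partition_onD1[OF part] by blast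
  have "(u,z) \<in> (gadget_E m)\<^sup>*"
    using grid_path[of "fst u" "fst z" "snd u" "snd z" m] z zV unfolding gadget_V_def
    by (cases u; cases z) auto
  then have PQ: "(P,Q) \<in> (quotient_arcs (gadget_E m) \<pi>)\<^sup>*"
    using lift_path[OF part P(1,2)] Q by blast
  have "(z,w) \<in> (gadget_E m)\<^sup>*"
    using grid_path[of "fst z" "fst w" "snd z" "snd w" m] z wV unfolding gadget_V_def
    by (cases w; cases z) auto
  then have QP: "(Q,P) \<in> (quotient_arcs (gadget_E m) \<pi>)\<^sup>*"
    using lift_path[OF part Q] P by blast
  have "P \<noteq> Q" using zP Q by auto
  then have "(P,Q) \<in> (quotient_arcs (gadget_E m) \<pi>)\<^sup>+" using PQ
    by (meson rtranclD)
  then have "(P,P) \<in> (quotient_arcs (gadget_E m) \<pi>)\<^sup>+" using QP by simp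
  then show False using ac unfolding acyclic_def by blast
qed

lemma part_share:
  assumes H: "H_star_partition (gadget_V m) (gadget_E m) \<pi>"
    and P: "P \<in> \<pi>" "u \<in> P" "w \<in> P"
  shows "fst u = fst w \<or> snd u = snd w"
proof -
  obtain ps where ps: "ham_path (gadget_E m) P ps" using H P unfolding H_star_partition_def by blast
  have gen: "fst u = fst w \<or> snd u = snd w"
    if uw: "u \<in> P" "w \<in> P" "fst u \<le> fst w" "snd u \<le> snd w" for u w
  proof (rule ccontr)
    assume "\<not> ?thesis"
    let ?z1 = "(fst u, snd w)" and ?z2 = "(fst w, snd u)"
    have "?z1 \<in> P" by (rule part_convex[OF H P(1) uw(1,2)]) (use uw in auto)
    moreover have "?z2 \<in> P" by (rule part_convex[OF H P(1) uw(1,2)]) (use uw in auto)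
    ultimately have "(fst ?z1 \<le> fst ?z2 \<and> snd ?z1 \<le> snd ?z2) \<or> (fst ?z2 \<le> fst ?z1 \<and> snd ?z2 \<le> snd ?z1)"
      using part_chain[OF ps] by blast
    then show False using \<open>\<not> _\<close> uw by auto
  qed
  from part_chain[OF ps P(2,3)] show ?thesis
    using gen[OF P(2,3)] gen[OF P(3,2)] by auto
qed

lemma sorted_subseq_upt:
  assumes "sorted_wrt (<) js" "set js \<subseteq> {..m}"
  shows "subseq js [0..<m+1]"
proof -
  have "js = filter (\<lambda>x. x \<in> set js) [0..<m+1]"
  proof (rule sorted_distinct_set_unique)
    show "sorted (filter (\<lambda>x. x \<in> set js) [0..<m+1])"
      by (rule sorted_wrt_filter) (simp only: sorted_upt)
  qed (use assms in \<open>auto simp: strict_sorted_iff subset_iff order.order_iff_strict\<close>)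
  then show ?thesis by (metis subseq_filter_left)
qed

lemma row_subseq:
  assumes ps: "ham_path (gadget_E m) P ps" and row: "\<forall>u\<in>P. fst u = i"
    and PV: "P \<subseteq> gadget_V m"
  shows "subseq ps (map (\<lambda>j. (i, j)) [0..<m+1])"
proof -
  have s: "successively (\<lambda>x y. (x, y) \<in> gadget_E m \<inter> (P \<times> P)) ps" "set ps = P"
    using ps unfolding ham_path_def by auto
  have "successively (\<lambda>x y. snd x < snd y) ps"
    using s(1) by (rule successively_mono) (use row s(2) in \<open>auto simp: gadget_E_def gadget_sw_def gadget_se_def; metis fst_conv n_not_Suc_n\<close>)
  then have "sorted_wrt (\<lambda>x y. snd x < snd y) ps"
    by (simp add: successively_conv_sorted_wrt transp_def)
  then have "sorted_wrt (<) (map snd ps)" by (simp add: sorted_wrt_map)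
  moreover have "set (map snd ps) \<subseteq> {..m}" using PV s(2) unfolding gadget_V_def by auto
  ultimately have "subseq (map snd ps) [0..<m+1]" by (rule sorted_subseq_upt)
  then have "subseq (map (\<lambda>j. (i, j)) (map snd ps)) (map (\<lambda>j. (i, j)) [0..<m+1])"
    by (rule subseq_map)
  moreover have "map (\<lambda>j. (i, j)) (map snd ps) = ps"
  proof -
    have "\<forall>u\<in>set ps. fst u = i" using row s(2) by simp
    then show ?thesis by (induction ps) auto
  qed
  ultimately show ?thesis by simp
qed

lemma col_subseq:
  assumes ps: "ham_path (gadget_E m) P ps" and col: "\<forall>u\<in>P. snd u = i"
    and PV: "P \<subseteq> gadget_V m"
  shows "subseq ps (map (\<lambda>k. (k, i)) [0..<m+1])"
proof -
  have s: "successively (\<lambda>x y. (x, y) \<in> gadget_E m \<inter> (P \<times> P)) ps" "set ps = P"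
    using ps unfolding ham_path_def by auto
  have "successively (\<lambda>x y. fst x < fst y) ps"
    using s(1) by (rule successively_mono) (use col s(2) in \<open>auto simp: gadget_E_def gadget_sw_def gadget_se_def; metis snd_conv n_not_Suc_n\<close>)
  then have "sorted_wrt (\<lambda>x y. fst x < fst y) ps"
    by (simp add: successively_conv_sorted_wrt transp_def)
  then have "sorted_wrt (<) (map fst ps)" by (simp add: sorted_wrt_map)
  moreover have "set (map fst ps) \<subseteq> {..m}" using PV s(2) unfolding gadget_V_def by auto
  ultimately have "subseq (map fst ps) [0..<m+1]" by (rule sorted_subseq_upt)
  then have "subseq (map (\<lambda>k. (k, i)) (map fst ps)) (map (\<lambda>k. (k, i)) [0..<m+1])"
    by (rule subseq_map)
  moreover have "map (\<lambda>k. (k, i)) (map fst ps) = ps"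
  proof -
    have "\<forall>u\<in>set ps. snd u = i" using col s(2) by simp
    then show ?thesis by (induction ps) auto
  qed
  ultimately show ?thesis by simp
qed

theorem lemma5p3:
  fixes m :: nat and \<pi> :: "(nat \<times> nat) set set"
  assumes "m > 0"
    and "H_star_partition (gadget_V m) (gadget_E m) \<pi>"
  shows "(\<forall>i\<le>m. \<exists>L\<in>\<pi>. \<exists>ps. ham_path (gadget_E m) L ps \<and>
              subseq ps (map (\<lambda>j. (i, j)) [0..<m+1]))
       \<or> (\<forall>i\<le>m. \<exists>R\<in>\<pi>. \<exists>ps. ham_path (gadget_E m) R ps \<and>
              subseq ps (map (\<lambda>k. (k, i)) [0..<m+1]))"
proof (rule ccontr)
  note H = assms(2)
  have part: "partition_on (gadget_V m) \<pi>" using H unfolding H_star_partition_def by auto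
  assume "\<not> ?thesis"
  then obtain i j where ij: "i \<le> m" "j \<le> m"
    and bi: "\<not> (\<exists>L\<in>\<pi>. \<exists>ps. ham_path (gadget_E m) L ps \<and> subseq ps (map (\<lambda>j. (i, j)) [0..<m+1]))"
    and bj: "\<not> (\<exists>R\<in>\<pi>. \<exists>ps. ham_path (gadget_E m) R ps \<and> subseq ps (map (\<lambda>k. (k, j)) [0..<m+1]))"
    by blast
  have "(i,j) \<in> gadget_V m" using ij unfolding gadget_V_def by auto
  then obtain P where P: "P \<in> \<pi>" "(i,j) \<in> P" using partition_onD1[OF part] by blast
  have PV: "P \<subseteq> gadget_V m" using P part partition_onD1 by blast
  obtain ps where ps: "ham_path (gadget_E m) P ps" using H P unfolding H_star_partition_def by blast
  have "(\<forall>u\<in>P. fst u = i) \<or> (\<forall>u\<in>P. snd u = j)"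
  proof (rule ccontr)
    assume "\<not> ?thesis"
    then obtain u w where u: "u \<in> P" "fst u \<noteq> i" and w: "w \<in> P" "snd w \<noteq> j" by blast
    have "snd u = j" using part_share[OF H P(1) P(2) u(1)] u by auto
    moreover have "fst w = i" using part_share[OF H P(1) P(2) w(1)] w by auto
    ultimately show False using part_share[OF H P(1) u(1) w(1)] u w by auto
  qed
  then show False
  proof
    assume "\<forall>u\<in>P. fst u = i"
    then have "subseq ps (map (\<lambda>j. (i, j)) [0..<m+1])" by (rule row_subseq[OF ps _ PV])
    then show False using bi ps P(1) by blast
  next
    assume "\<forall>u\<in>P. snd u = j"
    then have "subseq ps (map (\<lambda>k. (k, j)) [0..<m+1])" by (rule col_subseq[OF ps _ PV])
    then show False using bj ps P(1) by blast
  qed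
qed

end
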